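(* Let $\Omega\subseteq\mathbb{H}$ be a domain such that $\Omega\cap\mathbb{R}\neq\emptyset$. Then its symmetric completion $\widetilde{\Omega}=\bigcup_{x+yJ\in\Omega}(x+y\mathbb{S})$ is an axially symmetric s-domain.
   Context: $\mathbb{H}$ denotes the quaternions, $\mathbb{S}=\{q\in\mathbb{H}: \mathrm{Re}(q)=0,\ |\mathrm{Im}(q)|=1\}$ the 2-sphere of imaginary units, $L_I=\mathbb{R}+\mathbb{R}I$ for $I\in\mathbb{S}$, and $x+y\mathbb{S}=\{x+yL: L\in\mathbb{S}\}$ for $x,y\in\mathbb{R}$. A domain is a connected open set. A domain $\Omega$ is an s-domain if $\Omega\cap\mathbb{R}\neq\emptyset$ and $\Omega\cap L_I$ is a domain in $L_I$ for every $I\in\mathbb{S}$. A set $\Omega$ is axially symmetric if for every $x+yI\in\Omega$ ($x,y\in\mathbb{R}$, $I\in\mathbb{S}$) the sphere $x+y\mathbb{S}$ is contained in $\Omega$. *)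

theory Defs
  imports "HOL-Analysis.Analysis"
begin

text \<open>Quaternions are modelled as their underlying real Euclidean space
  H = R x R^3: the first component is the real part, the second the imaginary
  part (coefficients of i, j, k). The norm of the product type is the Euclidean
  norm of R^4, so the topology is the standard one. Quaternion multiplication is
  not needed: x + yI with x, y real and I imaginary is x + y *R I.\<close>

type_synonym quat = "real \<times> (real^3)"

definition qreal :: "real \<Rightarrow> quat" where
  "qreal x = (x, 0)"

definition realline :: "quat set" where
  "realline = range qreal"

definition imag_units :: "quat set" where
  "imag_units = {q. fst q = 0 \<and> norm (snd q) = 1}"

definition slice :: "quat \<Rightarrow> quat set" where
  "slice I = {qreal a + b *\<^sub>R I | a b. True}"

definition sph :: "real \<Rightarrow> real \<Rightarrow> quat set" where
  "sph x y = {qreal x + y *\<^sub>R L | L. L \<in> imag_units}"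

definition is_domain :: "quat set \<Rightarrow> bool" where
  "is_domain \<Omega> \<longleftrightarrow> open \<Omega> \<and> connected \<Omega>"

definition s_domain :: "quat set \<Rightarrow> bool" where
  "s_domain \<Omega> \<longleftrightarrow> is_domain \<Omega> \<and> \<Omega> \<inter> realline \<noteq> {} \<and>
     (\<forall>I \<in> imag_units. openin (top_of_set (slice I)) (\<Omega> \<inter> slice I)
                        \<and> connected (\<Omega> \<inter> slice I))"

definition axially_symmetric :: "quat set \<Rightarrow> bool" where
  "axially_symmetric \<Omega> \<longleftrightarrow>
     (\<forall>x y I. I \<in> imag_units \<and> qreal x + y *\<^sub>R I \<in> \<Omega> \<longrightarrow> sph x y \<subseteq> \<Omega>)"

definition sym_completion :: "quat set \<Rightarrow> quat set" where
  "sym_completion \<Omega> =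
     \<Union>{sph x y | x y J. J \<in> imag_units \<and> qreal x + y *\<^sub>R J \<in> \<Omega>}"

end

theory Submission
  imports Defs
begin

lemma qadd: "qreal x + y *\<^sub>R (J::quat) = (x + y * fst J, y *\<^sub>R snd J)"
  by (cases J) (simp add: qreal_def)

lemma orth_cont: "orthogonal_transformation g \<Longrightarrow> continuous_on S (\<lambda>p::quat. (fst p, g (snd p)))"
proof -
  assume "orthogonal_transformation g"
  then have "linear g" by (rule orthogonal_transformation_linear)
  then have bl: "bounded_linear g" using linear_conv_bounded_linear by blast
  have "bounded_linear (\<lambda>p::quat. g (snd p))"
    using bounded_linear_compose[OF bl bounded_linear_snd] .
  then have c2: "continuous_on S (\<lambda>p::quat. g (snd p))" by (rule linear_continuous_on)
  show ?thesis by (rule continuous_on_Pair[OF continuous_on_fst[OF continuous_on_id] c2])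
qed

lemma symc_iff: "q \<in> sym_completion \<Omega> \<longleftrightarrow> (\<exists>x y J. J \<in> imag_units \<and> qreal x + y *\<^sub>R J \<in> \<Omega> \<and> q \<in> sph x y)"
  unfolding sym_completion_def by blast

lemma sph_iff: "q \<in> sph x y \<longleftrightarrow> (\<exists>L. L \<in> imag_units \<and> q = qreal x + y *\<^sub>R L)"
  unfolding sph_def by blast

lemma unit_e: "(0, axis 1 1) \<in> imag_units"
  by (simp add: imag_units_def)

lemma unit_n: "w \<noteq> 0 \<Longrightarrow> (0, w /\<^sub>R norm w) \<in> imag_units"
  by (simp add: imag_units_def)

lemma mem_symc:
  "((a, v) \<in> sym_completion \<Omega>) \<longleftrightarrow> (\<exists>w. norm w = norm v \<and> (a, w) \<in> \<Omega>)"
proof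
  assume "(a, v) \<in> sym_completion \<Omega>"
  then obtain x y J L where J: "J \<in> imag_units" "qreal x + y *\<^sub>R J \<in> \<Omega>"
    and L: "L \<in> imag_units" "(a, v) = qreal x + y *\<^sub>R L"
    unfolding symc_iff sph_iff by blast
  have nJ: "norm (snd J) = 1" "norm (snd L) = 1" using J(1) L(1) by (auto simp: imag_units_def)
  have e1: "qreal x + y *\<^sub>R J = (x, y *\<^sub>R snd J)" using J(1) by (simp add: qadd imag_units_def)
  have e2: "a = x" "v = y *\<^sub>R snd L" using L(2) L(1) by (simp_all add: qadd imag_units_def)
  have "(a, y *\<^sub>R snd J) \<in> \<Omega>" using J(2) e1 e2 by simp
  moreover have "norm (y *\<^sub>R snd J) = norm v" using nJ e2 by simp
  ultimately show "\<exists>w. norm w = norm v \<and> (a, w) \<in> \<Omega>" by blast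
next
  assume "\<exists>w. norm w = norm v \<and> (a, w) \<in> \<Omega>"
  then obtain w where w: "norm w = norm v" "(a, w) \<in> \<Omega>" by blast
  obtain J where J: "J \<in> imag_units" "norm w *\<^sub>R snd J = w"
  proof (cases "w = 0")
    case True then show ?thesis using that[OF unit_e] by simp
  next
    case False then show ?thesis using that[OF unit_n[OF False]] by simp
  qed
  obtain L where L: "L \<in> imag_units" "norm w *\<^sub>R snd L = v"
  proof (cases "v = 0")
    case True then show ?thesis using that[OF unit_e] w(1) by simp
  next
    case False then show ?thesis using that[OF unit_n[OF False]] w(1) by simp
  qed
  have J2: "qreal a + norm w *\<^sub>R J = (a, w)" using J by (simp add: qadd imag_units_def)
  have L2: "(a, v) = qreal a + norm w *\<^sub>R L" using L by (simp add: qadd imag_units_def)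
  have "(a, v) \<in> sph a (norm w)" unfolding sph_iff using L(1) L2 by blast
  then show "(a, v) \<in> sym_completion \<Omega>"
    unfolding symc_iff using J(1) J2 w(2) by (intro exI[of _ a] exI[of _ "norm w"] exI[of _ J]) simp
qed

lemma mem_symc': "q \<in> sym_completion \<Omega> \<longleftrightarrow> (\<exists>w. norm w = norm (snd q) \<and> (fst q, w) \<in> \<Omega>)"
  using mem_symc[of "fst q" "snd q"] by simp

theorem proposition3p4:
  fixes \<Omega> :: "quat set"
  assumes "is_domain \<Omega>" and "\<Omega> \<inter> realline \<noteq> {}"
  shows "axially_symmetric (sym_completion \<Omega>) \<and> s_domain (sym_completion \<Omega>)"
proof -
  let ?S = "sym_completion \<Omega>"
  have op: "open \<Omega>" and co: "connected \<Omega>" using assms(1) by (auto simp: is_domain_def)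
  obtain r where r: "(r, 0) \<in> \<Omega>" using assms(2) by (auto simp: realline_def qreal_def)
  have sub: "\<Omega> \<subseteq> ?S" using mem_symc' by fastforce
  have ax: "axially_symmetric ?S"
    unfolding axially_symmetric_def
  proof (intro allI impI subsetI)
    fix x y I q assume h: "I \<in> imag_units \<and> qreal x + y *\<^sub>R I \<in> ?S" and q: "q \<in> sph x y"
    then obtain L where L: "L \<in> imag_units" "q = qreal x + y *\<^sub>R L" unfolding sph_def by blast
    from h obtain w where "norm w = norm (y *\<^sub>R snd I)" "(x, w) \<in> \<Omega>"
      by (auto simp: qadd imag_units_def mem_symc)
    then show "q \<in> ?S" using h L by (auto simp: qadd imag_units_def mem_symc)
  qed
  have opS: "open ?S"
  proof (rule Topological_Spaces.openI)
    fix q assume "q \<in> ?S"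
    then obtain w where w: "norm w = norm (snd q)" "(fst q, w) \<in> \<Omega>" using mem_symc' by blast
    obtain g where g: "orthogonal_transformation g" "g (snd q) = w"
      using orthogonal_transformation_exists[of "snd q" w] w(1) by metis
    define U where "U = (\<lambda>p. (fst p, g (snd p))) -` \<Omega>"
    have c: "continuous_on UNIV (\<lambda>p::quat. (fst p, g (snd p)))"
      using g(1) by (rule orth_cont)
    have "open U" unfolding U_def by (rule open_vimage[OF op c])
    moreover have "q \<in> U" using w g by (simp add: U_def)
    moreover have "U \<subseteq> ?S"
    proof
      fix p assume "p \<in> U"
      then have "(fst p, g (snd p)) \<in> \<Omega>" by (simp add: U_def)
      moreover have "norm (g (snd p)) = norm (snd p)" using g(1) orthogonal_transformation_norm by blast
      ultimately have "\<exists>w. norm w = norm (snd p) \<and> (fst p, w) \<in> \<Omega>" by blast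
      then show "p \<in> ?S" by (simp only: mem_symc')
    qed
    ultimately show "\<exists>T. open T \<and> q \<in> T \<and> T \<subseteq> ?S" by blast
  qed
  define F :: "quat set set" where "F = {(\<lambda>p. (fst p, f (snd p))) ` \<Omega> | f :: real^3 \<Rightarrow> real^3. orthogonal_transformation f}"
  have SF: "?S = \<Union>F"
  proof
    show "?S \<subseteq> \<Union>F"
    proof
      fix q assume "q \<in> ?S"
      then obtain w where w: "norm w = norm (snd q)" "(fst q, w) \<in> \<Omega>" using mem_symc' by blast
      obtain f where f: "orthogonal_transformation f" "f w = snd q"
        using orthogonal_transformation_exists[of w "snd q"] w(1) by metis
      have "q \<in> (\<lambda>p. (fst p, f (snd p))) ` \<Omega>"
        using w(2) f(2) by (intro image_eqI[of _ _ "(fst q, w)"]) auto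
      then show "q \<in> \<Union>F" using f(1) unfolding F_def by blast
    qed
    show "\<Union>F \<subseteq> ?S"
      by (auto simp: F_def mem_symc' orthogonal_transformation_norm)
  qed
  have coS: "connected ?S" unfolding SF
  proof (rule connected_Union)
    fix s assume "s \<in> F"
    then obtain f where f: "orthogonal_transformation f" "s = (\<lambda>p. (fst p, f (snd p))) ` \<Omega>"
      unfolding F_def by blast
    have "continuous_on \<Omega> (\<lambda>p::quat. (fst p, f (snd p)))"
      using f(1) by (rule orth_cont)
    then show "connected s" using f(2) co connected_continuous_image by blast
  next
    have "(r, 0) \<in> \<Inter>F" using r
      by (auto simp: F_def orthogonal_transformation_linear linear_0 intro!: image_eqI[of _ _ "(r,0)"])
    then show "\<Inter>F \<noteq> {}" by blast
  qed
  have sl: "connected (?S \<inter> slice I)" if I: "I \<in> imag_units" for I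
  proof -
    have nI: "norm (snd I) = 1" "fst I = 0" using I by (auto simp: imag_units_def)
    define A where "A = (\<lambda>p::quat. (fst p, norm (snd p) *\<^sub>R snd I)) ` \<Omega>"
    define B where "B = (\<lambda>p::quat. (fst p, (- norm (snd p)) *\<^sub>R snd I)) ` \<Omega>"
    have eq: "?S \<inter> slice I = A \<union> B"
    proof
      show "?S \<inter> slice I \<subseteq> A \<union> B"
      proof
        fix q assume q: "q \<in> ?S \<inter> slice I"
        then obtain a b where ab: "q = (a, b *\<^sub>R snd I)"
          using nI by (auto simp: slice_def qadd)
        from q ab obtain w where w: "norm w = \<bar>b\<bar>" "(a, w) \<in> \<Omega>"
          using nI by (auto simp: mem_symc)
        show "q \<in> A \<union> B"
        proof (cases "b \<ge> 0")
          case True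
          then have "q = (\<lambda>p::quat. (fst p, norm (snd p) *\<^sub>R snd I)) (a, w)" using ab w by simp
          then show ?thesis using w(2) unfolding A_def by blast
        next
          case False
          then have "q = (\<lambda>p::quat. (fst p, (- norm (snd p)) *\<^sub>R snd I)) (a, w)" using ab w by simp
          then show ?thesis using w(2) unfolding B_def by blast
        qed
      qed
      have "A \<subseteq> slice I" "B \<subseteq> slice I" unfolding A_def B_def slice_def
        using nI by (auto simp: qadd) (metis scaleR_minus_left)
      moreover have "A \<subseteq> ?S" "B \<subseteq> ?S" unfolding A_def B_def
        using nI by (auto simp: mem_symc)
      ultimately show "A \<union> B \<subseteq> ?S \<inter> slice I" by blast
    qed
    have cA: "connected A" unfolding A_def
      by (rule connected_continuous_image[OF _ co]) (intro continuous_intros)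
    have cB: "connected B" unfolding B_def
      by (rule connected_continuous_image[OF _ co]) (intro continuous_intros)
    have "(r, 0) \<in> A \<inter> B" using r unfolding A_def B_def
      by (auto intro!: image_eqI[of _ _ "(r,0)"])
    then show ?thesis unfolding eq using cA cB connected_Un by blast
  qed
  have "?S \<inter> realline \<noteq> {}" using assms(2) sub by blast
  moreover have "openin (top_of_set (slice I)) (?S \<inter> slice I)" for I
    using openin_open_Int[OF opS, of "slice I"] by (simp add: Int_commute)
  ultimately show ?thesis using ax opS coS sl
    by (simp add: s_domain_def is_domain_def)
qed

end
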